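(* Let $G_1$ be an $r_1$-regular graph with $r_1\ge 1$ on $n_1$ vertices and $m_1$ edges, and let $G_2$ be an $r_2$-regular graph with $r_2\ge1$ on $n_2$ vertices. Let $0=\mu_1,\mu_2,\ldots,\mu_{n_1}$ be the normalized Laplacian eigenvalues of $G_1$ and $0=\nu_1,\nu_2,\ldots,\nu_{n_2}$ those of $G_2$ (listed with multiplicity). Then the normalized Laplacian spectrum (as a multiset) of the subdivision-vertex join $G_1\dot{\vee}G_2$ consists of: (i) $0$; (ii) $1$, with multiplicity $m_1-n_1$; (iii) $\dfrac{n_1+r_2\nu_i}{r_2+n_1}$ for $i=2,\ldots,n_2$; (iv) for each $i=2,\ldots,n_1$, the two roots of $(x-1)^2-\dfrac{r_1(2-\mu_i)}{2(r_1+n_2)}=0$; (v) the two roots of $x^2-\left(2+\dfrac{n_1}{r_2+n_1}\right)x+\dfrac{2n_1}{r_2+n_1}+\dfrac{n_2r_2}{(r_1+n_2)(r_2+n_1)}=0$. (If $m_1<n_1$, which can only happen when $r_1=1$, item (ii) means that $n_1-m_1$ copies of $1$ are removed from the multiset formed by items (i), (iii), (iv), (v).) Equivalently, the characteristic polynomial of $\mathcal{L}(G_1\dot{\vee}G_2)$ equals $$x(x-1)^{m_1-n_1}\left(x^2-\left(2+\tfrac{n_1}{r_2+n_1}\right)x+\tfrac{2n_1}{r_2+n_1}+\tfrac{n_2r_2}{(r_1+n_2)(r_2+n_1)}\right)\prod_{i=2}^{n_1}\left((x-1)^2-\tfrac{r_1(2-\mu_i)}{2(r_1+n_2)}\right)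\prod_{i=2}^{n_2}\left(x-\tfrac{n_1+r_2\nu_i}{r_2+n_1}\right).$$
   Context: All graphs are finite and simple. For a graph $G$ without isolated vertices, with adjacency matrix $A(G)$ and diagonal degree matrix $D(G)$, the normalized Laplacian matrix is $\mathcal{L}(G)=I-D(G)^{-1/2}A(G)D(G)^{-1/2}$; its eigenvalues (with multiplicity) form the normalized Laplacian spectrum of $G$. The subdivision graph $S(G)$ of $G$ is obtained by inserting a new vertex into every edge of $G$; the set of these new vertices is denoted $I(G)$. The subdivision-vertex join $G_1\dot{\vee}G_2$ of graphs $G_1,G_2$ is the graph obtained from $S(G_1)$ and (a disjoint copy of) $G_2$ by joining each vertex of $V(G_1)$ with every vertex of $V(G_2)$. *)

theory Defs
  imports "Jordan_Normal_Form.Char_Poly" "HOL.Real"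
begin

definition simple_graph :: "'a set \<Rightarrow> 'a set set \<Rightarrow> bool" where
  "simple_graph V E \<longleftrightarrow> finite V \<and> (\<forall>e\<in>E. \<exists>u v. u \<noteq> v \<and> e = {u, v} \<and> u \<in> V \<and> v \<in> V)"

definition degree :: "'a set \<Rightarrow> 'a set set \<Rightarrow> 'a \<Rightarrow> nat" where
  "degree V E v = card {u \<in> V. {u, v} \<in> E}"

definition regular :: "'a set \<Rightarrow> 'a set set \<Rightarrow> nat \<Rightarrow> bool" where
  "regular V E r \<longleftrightarrow> (\<forall>v\<in>V. degree V E v = r)"

text \<open>A fixed enumeration of the (finite) vertex set; the characteristic
  polynomial of the normalized Laplacian does not depend on this choice.\<close>

definition vertex_list :: "'a set \<Rightarrow> 'a list" where
  "vertex_list V = (SOME xs. distinct xs \<and> set xs = V)"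

definition norm_laplacian :: "'a set \<Rightarrow> 'a set set \<Rightarrow> real mat" where
  "norm_laplacian V E =
    (let xs = vertex_list V in
     mat (length xs) (length xs)
       (\<lambda>(i, j). (if i = j then 1 else 0)
          - (if {xs ! i, xs ! j} \<in> E \<and> xs ! i \<noteq> xs ! j then 1 else 0)
            / sqrt (real (degree V E (xs ! i)) * real (degree V E (xs ! j)))))"

text \<open>Subdivision-vertex join. Vertices: Inl (Inl v) for v in V(G1),
  Inl (Inr e) for the subdivision vertex of edge e of G1, Inr w for w in V(G2).\<close>

definition svj_vertices :: "'a set \<Rightarrow> 'a set set \<Rightarrow> 'b set \<Rightarrow> (('a + 'a set) + 'b) set" where
  "svj_vertices V1 E1 V2 = (Inl \<circ> Inl) ` V1 \<union> (Inl \<circ> Inr) ` E1 \<union> Inr ` V2"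

definition svj_edges :: "'a set \<Rightarrow> 'a set set \<Rightarrow> 'b set \<Rightarrow> 'b set set \<Rightarrow> (('a + 'a set) + 'b) set set" where
  "svj_edges V1 E1 V2 E2 =
     {{Inl (Inl v), Inl (Inr e)} | v e. e \<in> E1 \<and> v \<in> e}
   \<union> {{Inr x, Inr y} | x y. {x, y} \<in> E2}
   \<union> {{Inl (Inl v), Inr w} | v w. v \<in> V1 \<and> w \<in> V2}"

end

theory Submission
  imports Defs
begin



lemma poly_char_poly_eval:
  assumes A: "(A :: real mat) \<in> carrier_mat n n"
  shows "poly (char_poly A) k = det (mat n n (\<lambda>(i,j). (if i = j then k else 0) - A $$ (i,j)))"
  unfolding char_poly_def
  by (rule poly_det_cong[of _ n], insert A, auto simp: char_poly_matrix_def)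

lemma det_perm_conj:
  assumes A: "(A :: 'a :: comm_ring_1 mat) \<in> carrier_mat n n" and p: "p permutes {0..<n}"
  shows "det (mat n n (\<lambda>(i,j). A $$ (p i, p j))) = det A"
proof -
  define B where "B = mat n n (\<lambda>(i,j). A $$ (i, p j))"
  have B: "B \<in> carrier_mat n n" unfolding B_def by auto
  have pl: "p i < n" if "i < n" for i using p that permutes_in_image by fastforce
  have "mat n n (\<lambda>(i,j). A $$ (p i, p j)) = mat n n (\<lambda>(i,j). B $$ (p i, j))"
    by (rule eq_matI, auto simp: B_def pl)
  hence 1: "det (mat n n (\<lambda>(i,j). A $$ (p i, p j))) = of_int (sign p) * det B"
    using det_permute_rows[OF B p] by simp
  have "transpose_mat B = mat n n (\<lambda>(i,j). transpose_mat A $$ (p i, j))"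
    by (rule eq_matI, insert A, auto simp: B_def pl)
  hence "det B = of_int (sign p) * det A"
    using det_permute_rows[of "transpose_mat A" n p] A p det_transpose[OF B] det_transpose[OF A]
    by auto
  moreover have "sign p = 1 \<or> sign p = -1" by (simp add: sign_def)
  ultimately show ?thesis using 1 by auto
qed

lemma schur1:
  fixes B C D :: "real mat"
  assumes B: "B \<in> carrier_mat m k" and C: "C \<in> carrier_mat k m" and D: "D \<in> carrier_mat k k"
    and y: "y \<noteq> 0"
  shows "det (four_block_mat (y \<cdot>\<^sub>m 1\<^sub>m m) B C D) = y ^ m * det (D - (1/y) \<cdot>\<^sub>m (C * B))"
proof -
  let ?S = "D - (1/y) \<cdot>\<^sub>m (C * B)"
  have S: "?S \<in> carrier_mat k k" using B C D by auto
  have e1: "y \<cdot>\<^sub>m 1\<^sub>m m * 1\<^sub>m m + 0\<^sub>m m k * 0\<^sub>m k m = y \<cdot>\<^sub>m 1\<^sub>m m"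
    using y by simp
  have e2: "y \<cdot>\<^sub>m 1\<^sub>m m * ((1/y) \<cdot>\<^sub>m B) + 0\<^sub>m m k * ?S = B"
    by (rule eq_matI, insert B S y, auto)
  have e3: "C * 1\<^sub>m m + 1\<^sub>m k * 0\<^sub>m k m = C"
    by (rule eq_matI, insert C, auto)
  have e4: "C * ((1/y) \<cdot>\<^sub>m B) + 1\<^sub>m k * ?S = D"
    by (rule eq_matI, insert B C D, auto)
  have eq: "four_block_mat (y \<cdot>\<^sub>m 1\<^sub>m m) B C D =
      four_block_mat (y \<cdot>\<^sub>m 1\<^sub>m m) (0\<^sub>m m k) C (1\<^sub>m k) *
      four_block_mat (1\<^sub>m m) ((1/y) \<cdot>\<^sub>m B) (0\<^sub>m k m) ?S"
    by (subst mult_four_block_mat[OF smult_carrier_mat[OF one_carrier_mat] zero_carrier_mat C one_carrier_mat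
       one_carrier_mat smult_carrier_mat[OF B] zero_carrier_mat S], simp only: e1 e2 e3 e4)
  have d1: "det (four_block_mat (y \<cdot>\<^sub>m 1\<^sub>m m) (0\<^sub>m m k) C (1\<^sub>m k)) = y ^ m"
    by (subst det_four_block_mat_upper_right_zero[of _ m _ k], insert C, auto)
  have d2: "det (four_block_mat (1\<^sub>m m) ((1/y) \<cdot>\<^sub>m B) (0\<^sub>m k m) ?S) = det ?S"
    by (subst det_four_block_mat_lower_left_zero[of _ m _ k], insert B S, auto)
  show ?thesis unfolding eq
    by (subst det_mult[of _ "m+k"], insert B C D S, auto simp: d1 d2)
qed

lemma schur2:
  fixes P B C Q :: "real mat"
  assumes P: "P \<in> carrier_mat n n" and B: "B \<in> carrier_mat n k" and C: "C \<in> carrier_mat k n"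
    and Q: "Q \<in> carrier_mat k k" and PB: "P * B = s \<cdot>\<^sub>m B" and s: "s \<noteq> 0"
  shows "det (four_block_mat P B C Q) = det P * det (Q - (1/s) \<cdot>\<^sub>m (C * B))"
proof -
  let ?S = "Q - (1/s) \<cdot>\<^sub>m (C * B)"
  let ?X = "(-(1/s)) \<cdot>\<^sub>m B"
  have S: "?S \<in> carrier_mat k k" using B C Q by auto
  have X: "?X \<in> carrier_mat n k" using B by auto
  have PB': "row P i \<bullet> col B j = s * B $$ (i,j)" if "i < n" "j < k" for i j
  proof -
    have "(P * B) $$ (i,j) = (s \<cdot>\<^sub>m B) $$ (i,j)" using PB by simp
    thus ?thesis using that P B by simp
  qed
  have e1: "P * 1\<^sub>m n + B * 0\<^sub>m k n = P"
    by (rule eq_matI, insert P B, auto)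
  have e2: "P * ?X + B * 1\<^sub>m k = 0\<^sub>m n k"
    by (rule eq_matI, insert P B s, auto simp: PB')
  have e3: "C * 1\<^sub>m n + Q * 0\<^sub>m k n = C"
    by (rule eq_matI, insert C Q, auto)
  have e4: "C * ?X + Q * 1\<^sub>m k = ?S"
    by (rule eq_matI, insert B C Q, auto)
  have eq: "four_block_mat P B C Q * four_block_mat (1\<^sub>m n) ?X (0\<^sub>m k n) (1\<^sub>m k)
      = four_block_mat P (0\<^sub>m n k) C ?S"
    by (subst mult_four_block_mat[OF P B C Q one_carrier_mat X zero_carrier_mat one_carrier_mat],
        simp only: e1 e2 e3 e4)
  have d1: "det (four_block_mat (1\<^sub>m n) ?X (0\<^sub>m k n) (1\<^sub>m k)) = 1"
    by (subst det_four_block_mat_lower_left_zero[of _ n _ k], insert X, auto)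
  have d2: "det (four_block_mat P (0\<^sub>m n k) C ?S) = det P * det ?S"
    by (subst det_four_block_mat_upper_right_zero[of _ n _ k], insert P C S, auto)
  have M: "four_block_mat P B C Q \<in> carrier_mat (n+k) (n+k)" using P B C Q by auto
  have "det (four_block_mat P B C Q) * 1 = det P * det ?S"
    using det_mult[OF M, of "four_block_mat (1\<^sub>m n) ?X (0\<^sub>m k n) (1\<^sub>m k)"] X
    unfolding eq d1 d2 by auto
  thus ?thesis by simp
qed

lemma rank_one_det:
  fixes Q u w :: "real mat"
  assumes Q: "Q \<in> carrier_mat n n" and u: "u \<in> carrier_mat n 1" and w: "w \<in> carrier_mat 1 n"
    and Qu: "Q * u = t \<cdot>\<^sub>m u" and t: "t \<noteq> 0"
  shows "det (Q - u * w) = (1 - (w * u) $$ (0,0) / t) * det Q"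
proof -
  let ?N = "four_block_mat (1\<^sub>m 1) w u Q"
  have N: "?N \<in> carrier_mat (1+n) (1+n)" using Q u w by auto
  have mw: "- w \<in> carrier_mat 1 n" using w by auto
  have S: "Q - u * w \<in> carrier_mat n n" using Q u w by auto
  have eqA: "?N * four_block_mat (1\<^sub>m 1) (- w) (0\<^sub>m n 1) (1\<^sub>m n)
     = four_block_mat (1\<^sub>m 1) (0\<^sub>m 1 n) u (Q - u * w)"
  proof -
    have e1: "1\<^sub>m 1 * 1\<^sub>m 1 + w * 0\<^sub>m n 1 = (1\<^sub>m 1 :: real mat)" using w by simp
    have e2: "1\<^sub>m 1 * - w + w * 1\<^sub>m n = 0\<^sub>m 1 n" by (rule eq_matI, insert w, auto)
    have e3: "u * 1\<^sub>m 1 + Q * 0\<^sub>m n 1 = u" by (rule eq_matI, insert u Q, auto)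
    have e4: "u * - w + Q * 1\<^sub>m n = Q - u * w" by (rule eq_matI, insert u w Q, auto)
    show ?thesis
      by (subst mult_four_block_mat[OF one_carrier_mat w u Q one_carrier_mat mw zero_carrier_mat one_carrier_mat],
        simp only: e1 e2 e3 e4)
  qed
  have dA1: "det (four_block_mat (1\<^sub>m 1) (- w) (0\<^sub>m n 1) (1\<^sub>m n)) = 1"
    by (subst det_four_block_mat_lower_left_zero[of _ 1 _ n], insert mw, auto)
  have dA2: "det (four_block_mat (1\<^sub>m 1) (0\<^sub>m 1 n) u (Q - u * w)) = det (Q - u * w)"
    by (subst det_four_block_mat_upper_right_zero[of _ 1 _ n], insert u S, auto)
  have RA: "four_block_mat (1\<^sub>m 1) (- w) (0\<^sub>m n 1) (1\<^sub>m n) \<in> carrier_mat (1+n) (1+n)"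
    using mw by auto
  have A: "det ?N = det (Q - u * w)"
    using det_mult[OF N RA] unfolding eqA dA1 dA2 by simp
  let ?c = "- (1/t)"
  have cu: "?c \<cdot>\<^sub>m u \<in> carrier_mat n 1" using u by auto
  have Qu': "row Q i \<bullet> col u j = t * u $$ (i,j)" if "i < n" "j < 1" for i j
  proof -
    have "(Q * u) $$ (i,j) = (t \<cdot>\<^sub>m u) $$ (i,j)" using Qu by simp
    thus ?thesis using that Q u by simp
  qed
  let ?a = "1\<^sub>m 1 + w * (?c \<cdot>\<^sub>m u)"
  have a: "?a \<in> carrier_mat 1 1" using w u by auto
  have eqB: "?N * four_block_mat (1\<^sub>m 1) (0\<^sub>m 1 n) (?c \<cdot>\<^sub>m u) (1\<^sub>m n)
     = four_block_mat ?a w (0\<^sub>m n 1) Q"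
  proof -
    have e2: "1\<^sub>m 1 * 0\<^sub>m 1 n + w * 1\<^sub>m n = w" by (rule eq_matI, insert w, auto)
    have e3: "u * 1\<^sub>m 1 + Q * (?c \<cdot>\<^sub>m u) = 0\<^sub>m n 1" by (rule eq_matI, insert u Q t, auto simp: Qu')
    have e4: "u * 0\<^sub>m 1 n + Q * 1\<^sub>m n = Q" by (rule eq_matI, insert u Q, auto)
    have e1: "1\<^sub>m 1 * 1\<^sub>m 1 + w * (?c \<cdot>\<^sub>m u) = ?a" by simp
    show ?thesis
      by (subst mult_four_block_mat[OF one_carrier_mat w u Q one_carrier_mat zero_carrier_mat cu one_carrier_mat],
        simp only: e1 e2 e3 e4)
  qed
  have dB1: "det (four_block_mat (1\<^sub>m 1) (0\<^sub>m 1 n) (?c \<cdot>\<^sub>m u) (1\<^sub>m n)) = 1"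
    by (subst det_four_block_mat_upper_right_zero[of _ 1 _ n], insert cu, auto)
  have dB2: "det (four_block_mat ?a w (0\<^sub>m n 1) Q) = det ?a * det Q"
    by (subst det_four_block_mat_lower_left_zero[of _ 1 _ n], insert a w Q, auto)
  have "det ?a = ?a $$ (0,0)" by (rule det_single[OF a])
  also have "\<dots> = 1 - (w * u) $$ (0,0) / t" using w u by auto
  finally have da: "det ?a = 1 - (w * u) $$ (0,0) / t" .
  have RB: "four_block_mat (1\<^sub>m 1) (0\<^sub>m 1 n) (?c \<cdot>\<^sub>m u) (1\<^sub>m n) \<in> carrier_mat (1+n) (1+n)"
    using cu by auto
  have B: "det ?N = det ?a * det Q"
    using det_mult[OF N RB] unfolding eqB dB1 dB2 by simp
  show ?thesis using A B da by simp
qed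

lemma det_affine_char_poly:
  fixes L :: "real mat"
  assumes L: "L \<in> carrier_mat n n" and cp: "char_poly L = (\<Prod>i<n. [:- \<mu> i, 1:])" and b: "\<beta> \<noteq> 0"
  shows "det (mat n n (\<lambda>(i,j). (if i = j then \<alpha> else 0) + \<beta> * L $$ (i,j))) = (\<Prod>i<n. \<alpha> + \<beta> * \<mu> i)"
proof -
  let ?z = "- \<alpha> / \<beta>"
  have "mat n n (\<lambda>(i,j). (if i = j then \<alpha> else 0) + \<beta> * L $$ (i,j))
      = (- \<beta>) \<cdot>\<^sub>m mat n n (\<lambda>(i,j). (if i = j then ?z else 0) - L $$ (i,j))"
    by (rule eq_matI, insert b, auto simp: field_simps)
  hence "det (mat n n (\<lambda>(i,j). (if i = j then \<alpha> else 0) + \<beta> * L $$ (i,j)))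
      = (- \<beta>) ^ n * poly (char_poly L) ?z"
    using poly_char_poly_eval[OF L, of ?z] by simp
  also have "\<dots> = (- \<beta>) ^ n * (\<Prod>i<n. ?z - \<mu> i)" unfolding cp by (auto simp: poly_prod intro!: prod.cong)
  also have "\<dots> = (\<Prod>i<n. (- \<beta>) * (?z - \<mu> i))" by (subst prod.distrib) simp
  also have "\<dots> = (\<Prod>i<n. \<alpha> + \<beta> * \<mu> i)" using b by (intro prod.cong, auto simp: field_simps)
  finally show ?thesis .
qed




lemma vertex_list: assumes "finite V"
  shows "distinct (vertex_list V)" "set (vertex_list V) = V" "length (vertex_list V) = card V"
proof -
  have "\<exists>xs. distinct xs \<and> set xs = V" using finite_distinct_list[OF assms] by auto
  hence *: "distinct (vertex_list V) \<and> set (vertex_list V) = V"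
    unfolding vertex_list_def by (rule someI_ex)
  thus "distinct (vertex_list V)" "set (vertex_list V) = V" by auto
  show "length (vertex_list V) = card V" using * distinct_card by fastforce
qed

lemma sum_nth_distinct: assumes "distinct xs"
  shows "(\<Sum>k<length xs. f (xs ! k)) = sum f (set xs)"
proof -
  have "(\<Sum>k<length xs. f (xs ! k)) = sum_list (map f xs)"
    by (simp add: sum_list_sum_nth atLeast0LessThan)
  also have "\<dots> = sum f (set xs)" by (rule sum_list_distinct_conv_sum_set[OF assms])
  finally show ?thesis .
qed

lemma det_reindex:
  fixes g :: "'v \<Rightarrow> 'v \<Rightarrow> 'r :: comm_ring_1"
  assumes xs: "distinct xs" and ys: "distinct ys" and set: "set xs = set ys"
  and N: "length xs = N"
  shows "det (mat N N (\<lambda>(i,j). g (xs!i) (xs!j))) = det (mat N N (\<lambda>(i,j). g (ys!i) (ys!j)))"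
proof -
  have lys: "length ys = N" using xs ys set N distinct_card by metis
  have ex1: "\<exists>!k. k < N \<and> ys ! k = xs ! i" if "i < N" for i
  proof -
    have "xs ! i \<in> set ys" using that set N by (metis nth_mem)
    then obtain k where "k < N" "ys ! k = xs ! i" using lys by (metis in_set_conv_nth)
    moreover have "k' = k" if "k' < N" "ys ! k' = xs ! i" for k'
      using that \<open>k < N\<close> \<open>ys ! k = xs ! i\<close> ys lys nth_eq_iff_index_eq by metis
    ultimately show ?thesis by blast
  qed
  define p where "p i = (if i < N then (THE k. k < N \<and> ys ! k = xs ! i) else i)" for i
  have pp: "p i < N \<and> ys ! p i = xs ! i" if "i < N" for i
    using theI'[OF ex1[OF that]] that unfolding p_def by simp
  have pin: "p i < N" if "i < N" for i using pp[OF that] by simp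
  have yp: "ys ! p i = xs ! i" if "i < N" for i using pp[OF that] by simp
  have inj: "inj_on p {0..<N}"
  proof (rule inj_onI)
    fix i j assume "i \<in> {0..<N}" "j \<in> {0..<N}" "p i = p j"
    hence "xs ! i = xs ! j" using yp by (metis atLeastLessThan_iff)
    thus "i = j" using xs N \<open>i \<in> {0..<N}\<close> \<open>j \<in> {0..<N}\<close> nth_eq_iff_index_eq by auto
  qed
  have im: "p ` {0..<N} = {0..<N}"
    using inj pin by (intro endo_inj_surj) auto
  have perm: "p permutes {0..<N}"
    by (rule bij_imp_permutes, simp add: bij_betw_def inj im, simp add: p_def)
  let ?Y = "mat N N (\<lambda>(i,j). g (ys!i) (ys!j))"
  have "mat N N (\<lambda>(i,j). g (xs!i) (xs!j)) = mat N N (\<lambda>(i,j). ?Y $$ (p i, p j))"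
    by (rule eq_matI, auto simp: pin yp)
  thus ?thesis using det_perm_conj[OF _ perm, of ?Y] by simp
qed




locale svjl =
  fixes V1 :: "'a set" and E1 :: "'a set set" and V2 :: "'b set" and E2 :: "'b set set"
    and r1 r2 :: nat
  assumes g1: "simple_graph V1 E1" and g2: "simple_graph V2 E2"
    and ne1: "V1 \<noteq> {}" and ne2: "V2 \<noteq> {}"
    and reg1: "regular V1 E1 r1" and r1: "r1 \<ge> 1"
    and reg2: "regular V2 E2 r2" and r2: "r2 \<ge> 1"
begin

abbreviation "Vs \<equiv> svj_vertices V1 E1 V2"
abbreviation "Es \<equiv> svj_edges V1 E1 V2 E2"

lemma fin1: "finite V1" using g1 unfolding simple_graph_def by auto
lemma fin2: "finite V2" using g2 unfolding simple_graph_def by auto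
lemma E1sub: "E1 \<subseteq> Pow V1" using g1 unfolding simple_graph_def by auto
lemma finE1: "finite E1" using finite_subset[OF E1sub] fin1 by simp
lemma edge1: "e \<in> E1 \<Longrightarrow> \<exists>u v. u \<noteq> v \<and> e = {u,v} \<and> u \<in> V1 \<and> v \<in> V1"
  using g1 unfolding simple_graph_def by auto
lemma edge2: "e \<in> E2 \<Longrightarrow> \<exists>u v. u \<noteq> v \<and> e = {u,v} \<and> u \<in> V2 \<and> v \<in> V2"
  using g2 unfolding simple_graph_def by auto
lemma card_e: assumes "e \<in> E1" shows "card e = 2"
proof -
  obtain u v where "u \<noteq> v" "e = {u,v}" using edge1[OF assms] by blast
  thus ?thesis by simp
qed
lemma e_sub: assumes "e \<in> E1" shows "e \<subseteq> V1"
proof -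
  obtain u v where "e = {u,v}" "u \<in> V1" "v \<in> V1" using edge1[OF assms] by blast
  thus ?thesis by simp
qed

lemma adj_LL: "{Inl (Inl u), Inl (Inl v)} \<notin> Es"
  unfolding svj_edges_def by (simp add: doubleton_eq_iff)
lemma adj_LR: "{Inl (Inl u), Inl (Inr e)} \<in> Es \<longleftrightarrow> e \<in> E1 \<and> u \<in> e"
  unfolding svj_edges_def by (simp add: doubleton_eq_iff)
lemma adj_RL: "{Inl (Inr e), Inl (Inl u)} \<in> Es \<longleftrightarrow> e \<in> E1 \<and> u \<in> e"
  using adj_LR by (simp add: insert_commute)
lemma adj_LZ: "{Inl (Inl u), Inr w} \<in> Es \<longleftrightarrow> u \<in> V1 \<and> w \<in> V2"
  unfolding svj_edges_def by (simp add: doubleton_eq_iff)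
lemma adj_ZL: "{Inr w, Inl (Inl u)} \<in> Es \<longleftrightarrow> u \<in> V1 \<and> w \<in> V2"
  using adj_LZ by (simp add: insert_commute)
lemma adj_RR: "{Inl (Inr e), Inl (Inr f)} \<notin> Es"
  unfolding svj_edges_def by (simp add: doubleton_eq_iff)
lemma adj_RZ: "{Inl (Inr e), Inr w} \<notin> Es"
  unfolding svj_edges_def by (simp add: doubleton_eq_iff)
lemma adj_ZR: "{Inr w, Inl (Inr e)} \<notin> Es"
  using adj_RZ by (simp add: insert_commute)
lemma adj_ZZ: "{Inr w, Inr z} \<in> Es \<longleftrightarrow> {w, z} \<in> E2"
  unfolding svj_edges_def by (auto simp: doubleton_eq_iff insert_commute)

lemmas adj = adj_LL adj_LR adj_RL adj_LZ adj_ZL adj_RR adj_RZ adj_ZR adj_ZZ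

lemma sum3_cases:
  obtains (L) a where "q = Inl (Inl a)" | (R) e where "q = Inl (Inr e)" | (Z) w where "q = Inr w"
  by (metis sum.exhaust)

lemma edges_at: assumes u: "u \<in> V1"
  shows "card {e \<in> E1. u \<in> e} = r1"
proof -
  have "{e \<in> E1. u \<in> e} = (\<lambda>v. {v, u}) ` {v \<in> V1. {v, u} \<in> E1}"
  proof (intro equalityI subsetI)
    fix e assume "e \<in> {e \<in> E1. u \<in> e}"
    then obtain a b where "a \<noteq> b" "e = {a,b}" "a \<in> V1" "b \<in> V1" "e \<in> E1" "u \<in> e"
      using edge1 by blast
    show "e \<in> (\<lambda>v. {v, u}) ` {v \<in> V1. {v, u} \<in> E1}"
    proof (cases "u = a")
      case True
      hence "e = {b, u}" using \<open>e = {a,b}\<close> by auto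
      thus ?thesis using \<open>b \<in> V1\<close> \<open>e \<in> E1\<close> by auto
    next
      case False
      hence "u = b" using \<open>u \<in> e\<close> \<open>e = {a,b}\<close> by auto
      hence "e = {a, u}" using \<open>e = {a,b}\<close> by auto
      thus ?thesis using \<open>a \<in> V1\<close> \<open>e \<in> E1\<close> by auto
    qed
  qed auto
  moreover have "inj_on (\<lambda>v. {v, u}) {v \<in> V1. {v, u} \<in> E1}"
  proof (rule inj_onI)
    fix v v' assume "v \<in> {v \<in> V1. {v, u} \<in> E1}" "v' \<in> {v \<in> V1. {v, u} \<in> E1}" "{v, u} = {v', u}"
    moreover have "v \<noteq> u"
    proof
      assume "v = u"
      hence "{u} \<in> E1" using \<open>v \<in> {v \<in> V1. {v, u} \<in> E1}\<close> by simp
      then obtain a b where "a \<noteq> b" "{u} = {a,b}" using edge1 by blast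
      thus False by (auto simp: doubleton_eq_iff)
    qed
    ultimately show "v = v'" by (auto simp: doubleton_eq_iff)
  qed
  ultimately have "card {e \<in> E1. u \<in> e} = card {v \<in> V1. {v, u} \<in> E1}" by (simp add: card_image)
  also have "\<dots> = r1" using reg1 u unfolding regular_def degree_def by auto
  finally show ?thesis .
qed

lemma common_edges: assumes u: "u \<in> V1" and v: "v \<in> V1"
  shows "card {e \<in> E1. u \<in> e \<and> v \<in> e} = (if u = v then r1 else if {u, v} \<in> E1 then 1 else 0)"
proof (cases "u = v")
  case True thus ?thesis using edges_at[OF u] by simp
next
  case False
  have two: "e = {u, v}" if e1: "e \<in> E1" and "u \<in> e" "v \<in> e" for e
  proof -
    obtain a b where "a \<noteq> b" "e = {a,b}" using edge1[OF e1] by blast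
    thus ?thesis using \<open>u \<in> e\<close> \<open>v \<in> e\<close> False by auto
  qed
  have sub: "{e \<in> E1. u \<in> e \<and> v \<in> e} \<subseteq> {{u,v}}"
    using two by blast
  show ?thesis
  proof (cases "{u, v} \<in> E1")
    case True
    hence se: "{e \<in> E1. u \<in> e \<and> v \<in> e} = {{u,v}}" using sub by blast
    have "card {e \<in> E1. u \<in> e \<and> v \<in> e} = 1" unfolding se by simp
    thus ?thesis using False True by simp
  next
    case F2: False
    hence se: "{e \<in> E1. u \<in> e \<and> v \<in> e} = {}" using sub by blast
    have "card {e \<in> E1. u \<in> e \<and> v \<in> e} = 0" unfolding se by simp
    thus ?thesis using False F2 by simp
  qed
qed

lemma degree_L: assumes u: "u \<in> V1" shows "degree Vs Es (Inl (Inl u)) = r1 + card V2"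
proof -
  have seq: "{q \<in> Vs. {q, Inl (Inl u)} \<in> Es} = (Inl \<circ> Inr) ` {e \<in> E1. u \<in> e} \<union> Inr ` V2"
  proof (rule Set.set_eqI)
    fix q show "q \<in> {q \<in> Vs. {q, Inl (Inl u)} \<in> Es} \<longleftrightarrow> q \<in> (Inl \<circ> Inr) ` {e \<in> E1. u \<in> e} \<union> Inr ` V2"
      by (cases q rule: sum3_cases) (simp_all add: adj svj_vertices_def image_iff u)
  qed
  have cd: "card ((Inl \<circ> Inr) ` {e \<in> E1. u \<in> e} \<union> Inr ` V2) = r1 + card V2"
    using edges_at[OF u] finE1 fin2
    by (subst card_Un_disjoint) (auto simp: card_image inj_on_def)
  show ?thesis unfolding degree_def seq cd by (rule refl)
qed

lemma degree_R: assumes e: "e \<in> E1" shows "degree Vs Es (Inl (Inr e)) = 2"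
proof -
  have seq: "{q \<in> Vs. {q, Inl (Inr e)} \<in> Es} = (Inl \<circ> Inl) ` e"
  proof (rule Set.set_eqI)
    fix q show "q \<in> {q \<in> Vs. {q, Inl (Inr e)} \<in> Es} \<longleftrightarrow> q \<in> (Inl \<circ> Inl) ` e"
      using e e_sub[OF e] by (cases q rule: sum3_cases) (auto simp add: adj svj_vertices_def image_iff)
  qed
  have cd: "card ((Inl \<circ> Inl) ` e) = 2"
    using card_e[OF e] by (subst card_image) (auto simp: inj_on_def)
  show ?thesis unfolding degree_def seq cd by (rule refl)
qed

lemma degree_Z: assumes w: "w \<in> V2" shows "degree Vs Es (Inr w) = r2 + card V1"
proof -
  have seq: "{q \<in> Vs. {q, Inr w} \<in> Es} = Inr ` {z \<in> V2. {z, w} \<in> E2} \<union> (Inl \<circ> Inl) ` V1"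
  proof (rule Set.set_eqI)
    fix q show "q \<in> {q \<in> Vs. {q, Inr w} \<in> Es} \<longleftrightarrow> q \<in> Inr ` {z \<in> V2. {z, w} \<in> E2} \<union> (Inl \<circ> Inl) ` V1"
      using w edge2 by (cases q rule: sum3_cases) (auto simp add: adj svj_vertices_def image_iff)
  qed
  have cr2: "card {z \<in> V2. {z, w} \<in> E2} = r2" using reg2 w unfolding regular_def degree_def by auto
  have cd: "card (Inr ` {z \<in> V2. {z, w} \<in> E2} \<union> (Inl \<circ> Inl) ` V1) = card {z \<in> V2. {z, w} \<in> E2} + card V1"
    using fin1 fin2
    by (subst card_Un_disjoint) (auto simp: card_image inj_on_def)
  show ?thesis unfolding degree_def seq cd cr2 by (rule refl)
qed

end



lemma sq2: fixes A :: real assumes "A \<ge> 0"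
  shows "1 / sqrt (A * 2) * (1 / sqrt (2 * A)) = 1 / (2 * A)"
proof -
  have e: "A * 2 = 2 * A" by simp
  have "sqrt (2 * A) * sqrt (2 * A) = 2 * A"
    using real_sqrt_mult_self[of "2*A"] abs_of_nonneg[of "2*A"] assms by linarith
  hence "sqrt (A * 2) * sqrt (2 * A) = 2 * A" unfolding e .
  moreover have "1 / sqrt (A * 2) * (1 / sqrt (2 * A)) = 1 / (sqrt (A * 2) * sqrt (2 * A))" by simp
  ultimately show ?thesis by simp
qed

context svjl begin

abbreviation "n1 \<equiv> card V1"
abbreviation "n2 \<equiv> card V2"
abbreviation "m1 \<equiv> card E1"

definition "us = vertex_list V1"
definition "ws = vertex_list V2"
definition "es = vertex_list E1"
definition "zs' = map (Inl \<circ> Inl) us @ map Inr ws"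
definition "zs = map (Inl \<circ> Inr) es @ zs'"

definition "hh x p q = (if p = q then x - 1 else 0) +
   (if {p, q} \<in> Es \<and> p \<noteq> q then 1 else 0) / sqrt (real (degree Vs Es p) * real (degree Vs Es q))"

lemma us: "distinct us" "set us = V1" "length us = n1" unfolding us_def using vertex_list fin1 by auto
lemma ws: "distinct ws" "set ws = V2" "length ws = n2" unfolding ws_def using vertex_list fin2 by auto
lemma es: "distinct es" "set es = E1" "length es = m1" unfolding es_def using vertex_list finE1 by auto

lemma zs'_len: "length zs' = n1 + n2" unfolding zs'_def using us ws by simp
lemma zs_len: "length zs = m1 + (n1 + n2)" unfolding zs_def using es zs'_len by simp
lemma zs_distinct: "distinct zs"
  unfolding zs_def zs'_def using us ws es by (auto simp: distinct_map inj_on_def)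
lemma zs_set: "set zs = Vs"
  unfolding zs_def zs'_def svj_vertices_def using us ws es by auto

lemma finVs: "finite Vs" unfolding svj_vertices_def using fin1 fin2 finE1 by simp
lemma cardVs: "card Vs = m1 + (n1 + n2)"
  using distinct_card[OF zs_distinct] zs_set zs_len by simp

lemma zs_nth: "i < m1 + (n1 + n2) \<Longrightarrow> zs ! i = (if i < m1 then Inl (Inr (es ! i)) else zs' ! (i - m1))"
  unfolding zs_def using es by (simp add: nth_append)
lemma zs'_nth: "i < n1 + n2 \<Longrightarrow> zs' ! i = (if i < n1 then Inl (Inl (us ! i)) else Inr (ws ! (i - n1)))"
  unfolding zs'_def using us ws by (simp add: nth_append)

lemma eval1:
  "poly (char_poly (norm_laplacian Vs Es)) x =
    det (mat (m1 + (n1 + n2)) (m1 + (n1 + n2)) (\<lambda>(i,j). hh x (zs ! i) (zs ! j)))"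
proof -
  let ?xs = "vertex_list Vs"
  let ?N = "m1 + (n1 + n2)"
  have xs: "distinct ?xs" "set ?xs = Vs" "length ?xs = ?N" using vertex_list[OF finVs] cardVs by auto
  have L: "norm_laplacian Vs Es = mat ?N ?N (\<lambda>(i, j). (if i = j then 1 else 0)
          - (if {?xs ! i, ?xs ! j} \<in> Es \<and> ?xs ! i \<noteq> ?xs ! j then 1 else 0)
            / sqrt (real (degree Vs Es (?xs ! i)) * real (degree Vs Es (?xs ! j))))"
    unfolding norm_laplacian_def Let_def xs(3) by simp
  have "poly (char_poly (norm_laplacian Vs Es)) x =
     det (mat ?N ?N (\<lambda>(i,j). (if i = j then x else 0) - norm_laplacian Vs Es $$ (i,j)))"
    by (rule poly_char_poly_eval) (simp add: L)
  also have "mat ?N ?N (\<lambda>(i,j). (if i = j then x else 0) - norm_laplacian Vs Es $$ (i,j))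
     = mat ?N ?N (\<lambda>(i,j). hh x (?xs ! i) (?xs ! j))"
  proof (rule eq_matI)
    fix i j assume ij: "i < dim_row (mat ?N ?N (\<lambda>(i,j). hh x (?xs ! i) (?xs ! j)))"
       "j < dim_col (mat ?N ?N (\<lambda>(i,j). hh x (?xs ! i) (?xs ! j)))"
    hence "i < ?N" "j < ?N" by auto
    hence eq: "(?xs ! i = ?xs ! j) = (i = j)" using xs nth_eq_iff_index_eq by metis
    show "mat ?N ?N (\<lambda>(i,j). (if i = j then x else 0) - norm_laplacian Vs Es $$ (i,j)) $$ (i,j)
       = mat ?N ?N (\<lambda>(i,j). hh x (?xs ! i) (?xs ! j)) $$ (i,j)"
      using \<open>i < ?N\<close> \<open>j < ?N\<close> unfolding L hh_def by (simp add: eq)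
  qed auto
  also have "det \<dots> = det (mat ?N ?N (\<lambda>(i,j). hh x (zs ! i) (zs ! j)))"
    by (rule det_reindex[OF xs(1) zs_distinct]) (use xs zs_set in auto)
  finally show ?thesis .
qed

lemma hh_RR: "hh x (Inl (Inr e)) (Inl (Inr f)) = (if e = f then x - 1 else 0)"
  unfolding hh_def by (simp add: adj)
lemma hh_LL: "hh x (Inl (Inl u)) (Inl (Inl v)) = (if u = v then x - 1 else 0)"
  unfolding hh_def by (simp add: adj)
lemma hh_LR: "u \<in> V1 \<Longrightarrow> e \<in> E1 \<Longrightarrow>
  hh x (Inl (Inl u)) (Inl (Inr e)) = (if u \<in> e then 1 else 0) / sqrt (real (r1 + n2) * 2)"
  unfolding hh_def by (simp add: adj degree_L degree_R)
lemma hh_RL: "u \<in> V1 \<Longrightarrow> e \<in> E1 \<Longrightarrow>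
  hh x (Inl (Inr e)) (Inl (Inl u)) = (if u \<in> e then 1 else 0) / sqrt (2 * real (r1 + n2))"
  unfolding hh_def by (simp add: adj degree_L degree_R)
lemma hh_LZ: "u \<in> V1 \<Longrightarrow> w \<in> V2 \<Longrightarrow>
  hh x (Inl (Inl u)) (Inr w) = 1 / sqrt (real (r1 + n2) * real (r2 + n1))"
  unfolding hh_def by (simp add: adj degree_L degree_Z)
lemma hh_ZL: "u \<in> V1 \<Longrightarrow> w \<in> V2 \<Longrightarrow>
  hh x (Inr w) (Inl (Inl u)) = 1 / sqrt (real (r1 + n2) * real (r2 + n1))"
  unfolding hh_def by (simp add: adj degree_L degree_Z mult.commute)
lemma hh_RZ: "hh x (Inl (Inr e)) (Inr w) = 0"
  unfolding hh_def by (simp add: adj)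
lemma hh_ZR: "hh x (Inr w) (Inl (Inr e)) = 0"
  unfolding hh_def by (simp add: adj)
lemma hh_ZZ: "w \<in> V2 \<Longrightarrow> z \<in> V2 \<Longrightarrow> hh x (Inr w) (Inr z) =
   (if w = z then x - 1 else 0) + (if {w, z} \<in> E2 \<and> w \<noteq> z then 1 else 0) / real (r2 + n1)"
  unfolding hh_def by (simp add: adj degree_Z)

definition "Bm x = mat m1 (n1+n2) (\<lambda>(i,j). hh x (Inl (Inr (es!i))) (zs'!j))"
definition "Cm x = mat (n1+n2) m1 (\<lambda>(i,j). hh x (zs'!i) (Inl (Inr (es!j))))"
definition "Dm x = mat (n1+n2) (n1+n2) (\<lambda>(i,j). hh x (zs'!i) (zs'!j))"

lemma Bm: "Bm x \<in> carrier_mat m1 (n1+n2)" unfolding Bm_def by simp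
lemma Cm: "Cm x \<in> carrier_mat (n1+n2) m1" unfolding Cm_def by simp
lemma Dm: "Dm x \<in> carrier_mat (n1+n2) (n1+n2)" unfolding Dm_def by simp

lemma block1: "mat (m1 + (n1 + n2)) (m1 + (n1 + n2)) (\<lambda>(i,j). hh x (zs ! i) (zs ! j))
   = four_block_mat ((x - 1) \<cdot>\<^sub>m 1\<^sub>m m1) (Bm x) (Cm x) (Dm x)"
proof (rule eq_matI)
  fix i j assume "i < dim_row (four_block_mat ((x - 1) \<cdot>\<^sub>m 1\<^sub>m m1) (Bm x) (Cm x) (Dm x))"
    "j < dim_col (four_block_mat ((x - 1) \<cdot>\<^sub>m 1\<^sub>m m1) (Bm x) (Cm x) (Dm x))"
  hence i: "i < m1 + (n1 + n2)" and j: "j < m1 + (n1 + n2)" by (auto simp: Dm_def)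
  have esd: "i < m1 \<Longrightarrow> j < m1 \<Longrightarrow> (es ! i = es ! j) = (i = j)"
    using es nth_eq_iff_index_eq by metis
  show "mat (m1 + (n1 + n2)) (m1 + (n1 + n2)) (\<lambda>(i,j). hh x (zs ! i) (zs ! j)) $$ (i, j) =
    four_block_mat ((x - 1) \<cdot>\<^sub>m 1\<^sub>m m1) (Bm x) (Cm x) (Dm x) $$ (i, j)"
    using i j Bm Cm Dm
    by (auto simp: zs_nth hh_RR esd Bm_def Cm_def Dm_def)
qed (auto simp: Dm_def)

lemma CB_entry: assumes i: "i < n1 + n2" and j: "j < n1 + n2"
  shows "(Cm x * Bm x) $$ (i,j) = (if i < n1 \<and> j < n1 then
      real (card {e \<in> E1. us ! i \<in> e \<and> us ! j \<in> e}) / (2 * real (r1 + n2)) else 0)"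
proof -
  define f where "f e = hh x (zs' ! i) (Inl (Inr e)) * hh x (Inl (Inr e)) (zs' ! j)" for e
  have "(Cm x * Bm x) $$ (i,j) = (\<Sum>k<m1. f (es ! k))"
    using i j Bm Cm unfolding f_def
    by (auto simp: Cm_def Bm_def scalar_prod_def atLeast0LessThan intro!: sum.cong)
  also have "\<dots> = sum f E1" using sum_nth_distinct[OF es(1), of f] es by simp
  also have "\<dots> = (if i < n1 \<and> j < n1 then
      real (card {e \<in> E1. us ! i \<in> e \<and> us ! j \<in> e}) / (2 * real (r1 + n2)) else 0)"
  proof (cases "i < n1 \<and> j < n1")
    case True
    have ui: "us ! i \<in> V1" and uj: "us ! j \<in> V1" using True us nth_mem by metis+
    have zi: "zs' ! i = Inl (Inl (us ! i))" and zj: "zs' ! j = Inl (Inl (us ! j))"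
      using True zs'_nth[of i] zs'_nth[of j] by auto
    have a: "1 / sqrt (real (r1 + n2) * 2) * (1 / sqrt (2 * real (r1 + n2))) = 1 / (2 * real (r1 + n2))"
      by (rule sq2) simp
    have "f e = (if e \<in> {e \<in> E1. us ! i \<in> e \<and> us ! j \<in> e} then 1 / (2 * real (r1 + n2)) else 0)"
      if "e \<in> E1" for e
    proof -
      have "f e = (if us ! i \<in> e then 1 else 0) / sqrt (real (r1 + n2) * 2) *
                  ((if us ! j \<in> e then 1 else 0) / sqrt (2 * real (r1 + n2)))"
        by (simp only: f_def zi zj hh_LR[OF ui that] hh_RL[OF uj that])
      thus ?thesis using that a by auto
    qed
    hence "sum f E1 = (\<Sum>e\<in>E1. if e \<in> {e \<in> E1. us ! i \<in> e \<and> us ! j \<in> e} then 1 / (2 * real (r1 + n2)) else 0)"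
      by (rule sum.cong[OF refl])
    also have "\<dots> = real (card {e \<in> E1. us ! i \<in> e \<and> us ! j \<in> e}) / (2 * real (r1 + n2))"
      using finE1 by (subst sum.If_cases) (auto simp: Int_def)
    finally show ?thesis using True by simp
  next
    case False
    have "f e = 0" for e
    proof (cases "i < n1")
      case True
      hence "\<not> j < n1" using False by auto
      hence zj: "zs' ! j = Inr (ws ! (j - n1))" using j zs'_nth[of j] by simp
      show ?thesis unfolding f_def zj by (simp add: hh_RZ)
    next
      case False
      hence zi: "zs' ! i = Inr (ws ! (i - n1))" using i zs'_nth[of i] by simp
      show ?thesis unfolding f_def zi by (simp add: hh_ZR)
    qed
    thus ?thesis using False by auto
  qed
  finally show ?thesis .
qed

abbreviation "L1 \<equiv> norm_laplacian V1 E1"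
abbreviation "L2 \<equiv> norm_laplacian V2 E2"

lemma deg1: "v \<in> V1 \<Longrightarrow> degree V1 E1 v = r1" using reg1 unfolding regular_def by auto
lemma deg2: "v \<in> V2 \<Longrightarrow> degree V2 E2 v = r2" using reg2 unfolding regular_def by auto

lemma L1_carrier: "L1 \<in> carrier_mat n1 n1"
  unfolding norm_laplacian_def Let_def us_def[symmetric] using us by simp
lemma L2_carrier: "L2 \<in> carrier_mat n2 n2"
  unfolding norm_laplacian_def Let_def ws_def[symmetric] using ws by simp

lemma L1_entry: "i < length us \<Longrightarrow> j < length us \<Longrightarrow> L1 $$ (i,j) = (if i = j then 1 else 0)
   - (if {us ! i, us ! j} \<in> E1 \<and> us ! i \<noteq> us ! j then 1 else 0) / real r1"
proof -
  assume ij: "i < length us" "j < length us"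
  hence "us ! i \<in> V1" "us ! j \<in> V1" using us nth_mem by metis+
  thus ?thesis unfolding norm_laplacian_def Let_def us_def[symmetric] using us ij
    by (simp add: deg1)
qed
lemma L2_entry: "i < length ws \<Longrightarrow> j < length ws \<Longrightarrow> L2 $$ (i,j) = (if i = j then 1 else 0)
   - (if {ws ! i, ws ! j} \<in> E2 \<and> ws ! i \<noteq> ws ! j then 1 else 0) / real r2"
proof -
  assume ij: "i < length ws" "j < length ws"
  hence "ws ! i \<in> V2" "ws ! j \<in> V2" using ws nth_mem by metis+
  thus ?thesis unfolding norm_laplacian_def Let_def ws_def[symmetric] using ws ij
    by (simp add: deg2)
qed

definition "aa = real (r1 + n2)"
definition "bb = real (r2 + n1)"
definition "ss x = (x - 1) - real r1 / (aa * (x - 1))"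
definition "be x = real r1 / (2 * aa * (x - 1))"
definition "tt x = (x - 1) + real r2 / bb"
definition "be2 = - (real r2 / bb)"
definition "cc = 1 / sqrt (aa * bb)"

definition "Pm x = mat n1 n1 (\<lambda>(i,j). (if i = j then ss x else 0) + be x * L1 $$ (i,j))"
definition "Qm x = mat n2 n2 (\<lambda>(i,j). (if i = j then tt x else 0) + be2 * L2 $$ (i,j))"
definition "Bc = mat n1 n2 (\<lambda>_. cc)"
definition "Cc = mat n2 n1 (\<lambda>_. cc)"

lemma aa_pos: "aa > 0" unfolding aa_def using r1 by simp
lemma bb_pos: "bb > 0" unfolding bb_def using r2 by simp

lemma alg_d: fixes y A r :: real assumes "y \<noteq> 0" "A > 0"
  shows "y - 1 / y * (r / (2 * A)) = (y - r / (A * y)) + r / (2 * A * y) * (1 - 0 / r)"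
  using assms by (simp add: field_simps)
lemma alg_o: fixes y A r c :: real assumes "y \<noteq> 0" "A > 0" "r \<noteq> 0"
  shows "0 - 1 / y * (c / (2 * A)) = 0 + r / (2 * A * y) * (0 - c / r)"
  using assms by (simp add: field_simps)

lemma alg_zd: fixes y B r :: real assumes "r \<noteq> 0"
  shows "y + 0 / B = (y + r / B) + (- (r / B)) * (1 - 0 / r)"
  using assms by (simp add: field_simps)
lemma alg_zo: fixes B r c :: real assumes "r \<noteq> 0"
  shows "0 + c / B = 0 + (- (r / B)) * (0 - c / r)"
  using assms by (simp add: field_simps)

lemma schur_block: assumes y: "x - 1 \<noteq> 0"
  shows "Dm x - (1 / (x - 1)) \<cdot>\<^sub>m (Cm x * Bm x) = four_block_mat (Pm x) Bc Cc (Qm x)"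
proof (rule eq_matI)
  fix i j assume "i < dim_row (four_block_mat (Pm x) Bc Cc (Qm x))"
    "j < dim_col (four_block_mat (Pm x) Bc Cc (Qm x))"
  hence i: "i < n1 + n2" and j: "j < n1 + n2" by (auto simp: Pm_def Qm_def)
  have r1': "real r1 \<noteq> 0" using r1 by simp
  have r2': "real r2 \<noteq> 0" using r2 by simp
  note a = aa_pos bb_pos
  have lhs: "(Dm x - (1 / (x - 1)) \<cdot>\<^sub>m (Cm x * Bm x)) $$ (i,j) = hh x (zs' ! i) (zs' ! j) - (1 / (x - 1)) *
     (if i < n1 \<and> j < n1 then real (card {e \<in> E1. us ! i \<in> e \<and> us ! j \<in> e}) / (2 * aa) else 0)"
  proof -
    have d: "dim_row (Cm x) = n1 + n2" "dim_col (Bm x) = n1 + n2"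
      using Bm[of x] Cm[of x] by auto
    show ?thesis using i j CB_entry[OF i j, of x] by (simp add: d Dm_def aa_def index_minus_mat)
  qed
  show "(Dm x - (1 / (x - 1)) \<cdot>\<^sub>m (Cm x * Bm x)) $$ (i,j) = four_block_mat (Pm x) Bc Cc (Qm x) $$ (i,j)"
  proof (cases "i < n1")
    case iT: True
    have zi: "zs' ! i = Inl (Inl (us ! i))" using iT zs'_nth[of i] by simp
    have ui: "us ! i \<in> V1" using iT us nth_mem by metis
    show ?thesis
    proof (cases "j < n1")
      case jT: True
      have zj: "zs' ! j = Inl (Inl (us ! j))" using jT zs'_nth[of j] by simp
      have uj: "us ! j \<in> V1" using jT us nth_mem by metis
      have eq: "(us ! i = us ! j) = (i = j)" using iT jT us nth_eq_iff_index_eq by metis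
      have rhs: "four_block_mat (Pm x) Bc Cc (Qm x) $$ (i,j) = (if i = j then ss x else 0) + be x * L1 $$ (i,j)"
        using iT jT by (simp add: Pm_def Qm_def Bc_def Cc_def)
      note U = lhs rhs zi zj hh_LL L1_entry[OF iT[folded us(3)] jT[folded us(3)]] common_edges[OF ui uj]
      show ?thesis
      proof (cases "i = j")
        case True
        thus ?thesis unfolding U using iT jT eq alg_d[OF y aa_pos, of "real r1"] by (simp add: ss_def be_def)
      next
        case False
        thus ?thesis unfolding U using r1 iT jT eq alg_o[OF y aa_pos r1', of "if {us ! i, us ! j} \<in> E1 then 1 else 0"]
          by (simp add: ss_def be_def)
      qed
    next
      case jF: False
      have zj: "zs' ! j = Inr (ws ! (j - n1))" using jF j zs'_nth[of j] by simp
      have wj: "ws ! (j - n1) \<in> V2" using jF j ws nth_mem by (metis add_diff_inverse_nat nat_add_left_cancel_less)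
      have rhs: "four_block_mat (Pm x) Bc Cc (Qm x) $$ (i,j) = cc"
        using iT jF j by (simp add: Pm_def Qm_def Bc_def Cc_def)
      show ?thesis unfolding lhs rhs zi zj hh_LZ[OF ui wj] using jF by (simp add: cc_def aa_def bb_def)
    qed
  next
    case iF: False
    have zi: "zs' ! i = Inr (ws ! (i - n1))" using iF i zs'_nth[of i] by simp
    have wi: "ws ! (i - n1) \<in> V2" using iF i ws nth_mem by (metis add_diff_inverse_nat nat_add_left_cancel_less)
    show ?thesis
    proof (cases "j < n1")
      case jT: True
      have zj: "zs' ! j = Inl (Inl (us ! j))" using jT zs'_nth[of j] by simp
      have uj: "us ! j \<in> V1" using jT us nth_mem by metis
      have rhs: "four_block_mat (Pm x) Bc Cc (Qm x) $$ (i,j) = cc"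
        using iF jT i by (simp add: Pm_def Qm_def Bc_def Cc_def)
      show ?thesis unfolding lhs rhs zi zj hh_ZL[OF uj wi] using iF by (simp add: cc_def aa_def bb_def)
    next
      case jF: False
      have zj: "zs' ! j = Inr (ws ! (j - n1))" using jF j zs'_nth[of j] by simp
      have wj: "ws ! (j - n1) \<in> V2" using jF j ws nth_mem by (metis add_diff_inverse_nat nat_add_left_cancel_less)
      have i': "i - n1 < n2" and j': "j - n1 < n2" using i j iF jF by auto
      have eq: "(ws ! (i - n1) = ws ! (j - n1)) = (i = j)"
        using i' j' iF jF ws nth_eq_iff_index_eq
        by (metis add_diff_inverse_nat)
      have rhs: "four_block_mat (Pm x) Bc Cc (Qm x) $$ (i,j) = (if i - n1 = j - n1 then tt x else 0) + be2 * L2 $$ (i - n1, j - n1)"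
        using iF jF i j by (simp add: Pm_def Qm_def Bc_def Cc_def)
      have ij: "(i - n1 = j - n1) = (i = j)" using iF jF by auto
      have bbe: "real (r2 + n1) = bb" unfolding bb_def ..
      note U = lhs rhs zi zj hh_ZZ[OF wi wj] L2_entry[OF i'[folded ws(3)] j'[folded ws(3)]] ij bbe
      show ?thesis
      proof (cases "i = j")
        case True
        thus ?thesis unfolding U using iF eq alg_zd[OF r2', of "x - 1" bb] by (simp add: tt_def be2_def)
      next
        case False
        thus ?thesis unfolding U using iF eq r2 alg_zo[OF r2', of "if {ws ! (i - n1), ws ! (j - n1)} \<in> E2 then 1 else 0" bb]
          by (simp add: tt_def be2_def)
      qed
    qed
  qed
qed (auto simp: Dm_def Pm_def Qm_def Cm_def Bm_def)

lemma rowsum1: assumes i: "i < n1" shows "(\<Sum>k<n1. L1 $$ (i,k)) = 0"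
proof -
  let ?u = "us ! i"
  have ui: "?u \<in> V1" using i us nth_mem by metis
  define g where "g v = (if ?u = v then 1 else 0) - (if {?u, v} \<in> E1 \<and> ?u \<noteq> v then 1 else 0) / real r1" for v
  have "(\<Sum>k<n1. L1 $$ (i,k)) = (\<Sum>k<length us. g (us ! k))"
  proof (rule sum.cong)
    fix k assume "k \<in> {..<length us}"
    hence k: "k < length us" by simp
    have "(i = k) = (?u = us ! k)" using i k us nth_eq_iff_index_eq by metis
    thus "L1 $$ (i,k) = g (us ! k)" unfolding g_def L1_entry[OF i[folded us(3)] k] by simp
  qed (simp add: us)
  also have "\<dots> = sum g V1" using sum_nth_distinct[OF us(1)] us by simp
  also have "\<dots> = (\<Sum>v\<in>V1. if ?u = v then 1 else 0) - (\<Sum>v\<in>V1. (if {?u, v} \<in> E1 \<and> ?u \<noteq> v then 1 else 0) / real r1)"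
    unfolding g_def by (simp add: sum_subtractf)
  also have "(\<Sum>v\<in>V1. if ?u = v then 1 else 0) = (1::real)" using fin1 ui by simp
  also have "(\<Sum>v\<in>V1. (if {?u, v} \<in> E1 \<and> ?u \<noteq> v then 1 else 0) / real r1)
      = real (card {v \<in> V1. {?u, v} \<in> E1 \<and> ?u \<noteq> v}) / real r1"
    using fin1 by (simp add: sum_divide_distrib[symmetric] sum.If_cases Int_def)
  also have "{v \<in> V1. {?u, v} \<in> E1 \<and> ?u \<noteq> v} = {v \<in> V1. {v, ?u} \<in> E1}"
  proof (intro Set.set_eqI iffI)
    fix v assume "v \<in> {v \<in> V1. {v, ?u} \<in> E1}"
    hence v: "v \<in> V1" "{v, ?u} \<in> E1" by auto
    have "?u \<noteq> v"
    proof
      assume "?u = v"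
      hence "{?u} \<in> E1" using v by simp
      then obtain a b where "a \<noteq> b" "{?u} = {a,b}" using edge1 by blast
      thus False by (auto simp: doubleton_eq_iff)
    qed
    thus "v \<in> {v \<in> V1. {?u, v} \<in> E1 \<and> ?u \<noteq> v}" using v by (simp add: insert_commute)
  qed (auto simp: insert_commute)
  also have "card {v \<in> V1. {v, ?u} \<in> E1} = r1" using deg1[OF ui] unfolding degree_def .
  finally show ?thesis using r1 by simp
qed

lemma rowsum2: assumes i: "i < n2" shows "(\<Sum>k<n2. L2 $$ (i,k)) = 0"
proof -
  let ?u = "ws ! i"
  have ui: "?u \<in> V2" using i ws nth_mem by metis
  define g where "g v = (if ?u = v then 1 else 0) - (if {?u, v} \<in> E2 \<and> ?u \<noteq> v then 1 else 0) / real r2" for v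
  have "(\<Sum>k<n2. L2 $$ (i,k)) = (\<Sum>k<length ws. g (ws ! k))"
  proof (rule sum.cong)
    fix k assume "k \<in> {..<length ws}"
    hence k: "k < length ws" by simp
    have "(i = k) = (?u = ws ! k)" using i k ws nth_eq_iff_index_eq by metis
    thus "L2 $$ (i,k) = g (ws ! k)" unfolding g_def L2_entry[OF i[folded ws(3)] k] by simp
  qed (simp add: ws)
  also have "\<dots> = sum g V2" using sum_nth_distinct[OF ws(1)] ws by simp
  also have "\<dots> = (\<Sum>v\<in>V2. if ?u = v then 1 else 0) - (\<Sum>v\<in>V2. (if {?u, v} \<in> E2 \<and> ?u \<noteq> v then 1 else 0) / real r2)"
    unfolding g_def by (simp add: sum_subtractf)
  also have "(\<Sum>v\<in>V2. if ?u = v then 1 else 0) = (1::real)" using fin2 ui by simp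
  also have "(\<Sum>v\<in>V2. (if {?u, v} \<in> E2 \<and> ?u \<noteq> v then 1 else 0) / real r2)
      = real (card {v \<in> V2. {?u, v} \<in> E2 \<and> ?u \<noteq> v}) / real r2"
    using fin2 by (simp add: sum_divide_distrib[symmetric] sum.If_cases Int_def)
  also have "{v \<in> V2. {?u, v} \<in> E2 \<and> ?u \<noteq> v} = {v \<in> V2. {v, ?u} \<in> E2}"
  proof (intro Set.set_eqI iffI)
    fix v assume "v \<in> {v \<in> V2. {v, ?u} \<in> E2}"
    hence v: "v \<in> V2" "{v, ?u} \<in> E2" by auto
    have "?u \<noteq> v"
    proof
      assume "?u = v"
      hence "{?u} \<in> E2" using v by simp
      then obtain a b where "a \<noteq> b" "{?u} = {a,b}" using edge2 by blast
      thus False by (auto simp: doubleton_eq_iff)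
    qed
    thus "v \<in> {v \<in> V2. {?u, v} \<in> E2 \<and> ?u \<noteq> v}" using v by (simp add: insert_commute)
  qed (auto simp: insert_commute)
  also have "card {v \<in> V2. {v, ?u} \<in> E2} = r2" using deg2[OF ui] unfolding degree_def .
  finally show ?thesis using r2 by simp
qed

lemma Pm_c: "Pm x \<in> carrier_mat n1 n1" unfolding Pm_def by simp
lemma Qm_c: "Qm x \<in> carrier_mat n2 n2" unfolding Qm_def by simp
lemma Bc_c: "Bc \<in> carrier_mat n1 n2" unfolding Bc_def by simp
lemma Cc_c: "Cc \<in> carrier_mat n2 n1" unfolding Cc_def by simp

lemma PB: "Pm x * Bc = ss x \<cdot>\<^sub>m Bc"
proof (rule eq_matI)
  fix i j assume "i < dim_row (ss x \<cdot>\<^sub>m Bc)" "j < dim_col (ss x \<cdot>\<^sub>m Bc)"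
  hence i: "i < n1" and j: "j < n2" by (auto simp: Bc_def)
  have "(Pm x * Bc) $$ (i,j) = (\<Sum>k<n1. ((if i = k then ss x else 0) + be x * L1 $$ (i,k)) * cc)"
    using i j by (simp add: Pm_def Bc_def scalar_prod_def atLeast0LessThan)
  also have "\<dots> = (\<Sum>k<n1. (if i = k then ss x * cc else 0)) + (\<Sum>k<n1. cc * be x * L1 $$ (i,k))"
    by (subst sum.distrib[symmetric]) (rule sum.cong, auto simp: algebra_simps)
  also have "(\<Sum>k<n1. (if i = k then ss x * cc else 0)) = ss x * cc" using i by simp
  also have "(\<Sum>k<n1. cc * be x * L1 $$ (i,k)) = cc * be x * (\<Sum>k<n1. L1 $$ (i,k))"
    by (simp add: sum_distrib_left)
  also have "\<dots> = 0" using rowsum1[OF i] by simp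
  finally show "(Pm x * Bc) $$ (i,j) = (ss x \<cdot>\<^sub>m Bc) $$ (i,j)" using i j by (simp add: Bc_def)
qed (auto simp: Pm_def Bc_def)

definition "Uc = mat n2 1 (\<lambda>_. 1)"
definition "Wc x = mat 1 n2 (\<lambda>_. real n1 * cc * cc / ss x)"

lemma QU: "Qm x * Uc = tt x \<cdot>\<^sub>m Uc"
proof (rule eq_matI)
  fix i j assume "i < dim_row (tt x \<cdot>\<^sub>m Uc)" "j < dim_col (tt x \<cdot>\<^sub>m Uc)"
  hence i: "i < n2" and j: "j < 1" by (auto simp: Uc_def)
  have "(Qm x * Uc) $$ (i,j) = (\<Sum>k<n2. ((if i = k then tt x else 0) + be2 * L2 $$ (i,k)))"
    using i j by (simp add: Qm_def Uc_def scalar_prod_def atLeast0LessThan)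
  also have "\<dots> = (\<Sum>k<n2. (if i = k then tt x else 0)) + (\<Sum>k<n2. be2 * L2 $$ (i,k))"
    by (subst sum.distrib[symmetric]) (rule sum.cong, auto simp: algebra_simps)
  also have "(\<Sum>k<n2. (if i = k then tt x else 0)) = tt x" using i by simp
  also have "(\<Sum>k<n2. be2 * L2 $$ (i,k)) = be2 * (\<Sum>k<n2. L2 $$ (i,k))"
    by (simp add: sum_distrib_left)
  also have "\<dots> = 0" using rowsum2[OF i] by simp
  finally show "(Qm x * Uc) $$ (i,j) = (tt x \<cdot>\<^sub>m Uc) $$ (i,j)" using i j by (simp add: Uc_def)
qed (auto simp: Qm_def Uc_def)

lemma CB_rank: "Qm x - (1 / ss x) \<cdot>\<^sub>m (Cc * Bc) = Qm x - Uc * Wc x"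
proof -
  have "(1 / ss x) \<cdot>\<^sub>m (Cc * Bc) = Uc * Wc x"
    by (rule eq_matI) (auto simp: Cc_def Bc_def Uc_def Wc_def scalar_prod_def)
  thus ?thesis by simp
qed

lemma WU: "(Wc x * Uc) $$ (0,0) = real n2 * (real n1 * cc * cc / ss x)"
  by (simp add: Wc_def Uc_def scalar_prod_def)

lemma det_S: assumes s: "ss x \<noteq> 0" and t: "tt x \<noteq> 0"
  shows "det (four_block_mat (Pm x) Bc Cc (Qm x))
     = det (Pm x) * ((1 - real n2 * (real n1 * cc * cc / ss x) / tt x) * det (Qm x))"
proof -
  have "det (four_block_mat (Pm x) Bc Cc (Qm x)) = det (Pm x) * det (Qm x - (1 / ss x) \<cdot>\<^sub>m (Cc * Bc))"
    by (rule schur2[OF Pm_c Bc_c Cc_c Qm_c PB s])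
  also have "det (Qm x - (1 / ss x) \<cdot>\<^sub>m (Cc * Bc)) = (1 - (Wc x * Uc) $$ (0,0) / tt x) * det (Qm x)"
    unfolding CB_rank
    by (rule rank_one_det[OF Qm_c _ _ QU t]) (auto simp: Uc_def Wc_def)
  finally show ?thesis unfolding WU .
qed

lemma main_eval:
  assumes x: "x > 2"
    and mu: "char_poly L1 = (\<Prod>i<n1. [:- \<mu> i, 1:])"
    and nu: "char_poly L2 = (\<Prod>i<n2. [:- \<nu> i, 1:])"
  shows "poly (char_poly (norm_laplacian Vs Es)) x =
    (x - 1) ^ m1 * ((\<Prod>i<n1. ss x + be x * \<mu> i) *
      ((1 - real n2 * (real n1 * cc * cc / ss x) / tt x) * (\<Prod>i<n2. tt x + be2 * \<nu> i)))"
proof -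
  have y: "x - 1 \<noteq> 0" using x by simp
  have "r1 / (aa * (x - 1)) < 1"
  proof -
    have "real r1 \<le> aa" unfolding aa_def by simp
    moreover have "aa < aa * (x - 1)" using aa_pos x by simp
    ultimately have "real r1 < aa * (x - 1)" by linarith
    thus ?thesis using aa_pos x by (simp add: divide_less_eq)
  qed
  hence s: "ss x \<noteq> 0" unfolding ss_def using x by simp
  have "real r2 / bb \<ge> 0" using bb_pos by simp
  hence t: "tt x \<noteq> 0" unfolding tt_def using x by linarith
  have be: "be x \<noteq> 0" unfolding be_def using x r1 aa_pos by simp
  have be2: "be2 \<noteq> 0" unfolding be2_def using r2 bb_pos by simp
  have "poly (char_poly (norm_laplacian Vs Es)) x
     = det (four_block_mat ((x - 1) \<cdot>\<^sub>m 1\<^sub>m m1) (Bm x) (Cm x) (Dm x))"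
    unfolding eval1 block1 ..
  also have "\<dots> = (x - 1) ^ m1 * det (Dm x - (1 / (x - 1)) \<cdot>\<^sub>m (Cm x * Bm x))"
    by (rule schur1[OF Bm Cm Dm y])
  also have "Dm x - (1 / (x - 1)) \<cdot>\<^sub>m (Cm x * Bm x) = four_block_mat (Pm x) Bc Cc (Qm x)"
    by (rule schur_block[OF y])
  also have "det \<dots> = det (Pm x) * ((1 - real n2 * (real n1 * cc * cc / ss x) / tt x) * det (Qm x))"
    by (rule det_S[OF s t])
  also have "det (Pm x) = (\<Prod>i<n1. ss x + be x * \<mu> i)"
    unfolding Pm_def by (rule det_affine_char_poly[OF L1_carrier mu be])
  also have "det (Qm x) = (\<Prod>i<n2. tt x + be2 * \<nu> i)"
    unfolding Qm_def by (rule det_affine_char_poly[OF L2_carrier nu be2])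
  finally show ?thesis .
qed

end



lemma alg_F: fixes y A r m :: real assumes "y \<noteq> 0" "A > 0"
  shows "(y - r / (A * y)) + r / (2 * A * y) * m = (y ^ 2 - r * (2 - m) / (2 * A)) / y"
  using assms by (simp add: field_simps power2_eq_square)
lemma alg_G: fixes x B r n v :: real assumes "B = r + n" "B > 0"
  shows "(x - 1 + r / B) + (- (r / B)) * v = x - (n + r * v) / B"
proof -
  have B: "B \<noteq> 0" using assms by simp
  have "n = B - r" using assms by simp
  have "(n + r * v) / B = n / B + r * v / B" by (simp add: add_divide_distrib)
  also have "n / B = 1 - r / B" unfolding \<open>n = B - r\<close> using B by (simp add: diff_divide_distrib)
  finally show ?thesis by simp
qed
lemma poly_id: fixes y p q :: real
  shows "(y\<^sup>2 - 1 + p) * (y + 1 - q) - y * (p * q) = (y + 1) * ((y + 1)\<^sup>2 - (2 + q) * (y + 1) + (2 * q + p * (1 - q)))"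
  by (simp add: power2_eq_square algebra_simps)
lemma alg_H: fixes y A B N1 N2 c s t :: real
  assumes y: "y > 0" and A: "A > 0" and B: "B > 0"
   and s: "s = y - (A - N2) / (A * y)" and t: "t = y + (B - N1) / B" and c: "c * c = 1 / (A * B)"
   and s0: "s \<noteq> 0" and t0: "t \<noteq> 0"
  shows "y * (s * ((1 - N2 * (N1 * c * c / s) / t) * t)) =
    (y + 1) * ((y + 1) ^ 2 - (2 + N1 / B) * (y + 1) + (2 * N1 / B + N2 * (B - N1) / (A * B)))"
proof -
  define p where "p = N2 / A"
  define q where "q = N1 / B"
  have "s * ((1 - N2 * (N1 * c * c / s) / t) * t) = s * t - N2 * N1 * (c * c)"
    using s0 t0 by (simp add: field_simps)
  also have "\<dots> = s * t - p * q" using c unfolding p_def q_def by simp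
  finally have e: "y * (s * ((1 - N2 * (N1 * c * c / s) / t) * t)) = (y * s) * t - y * (p * q)"
    by (simp add: algebra_simps)
  have ys: "y * s = y\<^sup>2 - 1 + p" unfolding s p_def using y A
    by (simp add: field_simps power2_eq_square)
  have tt: "t = y + 1 - q" unfolding t q_def using B by (simp add: field_simps)
  have r: "N2 * (B - N1) / (A * B) = p * (1 - q)" unfolding p_def q_def using A B by (simp add: field_simps)
  have r2: "2 * N1 / B = 2 * q" unfolding q_def by simp
  show ?thesis unfolding e unfolding ys tt r r2 q_def[symmetric] by (rule poly_id)
qed
context svjl begin

lemma n1_pos: "n1 \<ge> 1" using ne1 fin1 by (simp add: Suc_le_eq card_gt_0_iff)
lemma n2_pos: "n2 \<ge> 1" using ne2 fin2 by (simp add: Suc_le_eq card_gt_0_iff)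

lemma prod_split0: "(n::nat) \<ge> 1 \<Longrightarrow> (\<Prod>i<n. f i) = f 0 * (\<Prod>i\<in>{1..<n}. f i)"
proof -
  assume "n \<ge> 1"
  have "{..<n} = insert 0 {1..<n}"
  proof (rule Set.set_eqI)
    fix i show "i \<in> {..<n} \<longleftrightarrow> i \<in> insert 0 {1..<n}" using \<open>n \<ge> 1\<close> by (cases i) auto
  qed
  thus ?thesis by simp
qed

lemma cc2: "cc * cc = 1 / (aa * bb)"
proof -
  have "sqrt (aa * bb) * sqrt (aa * bb) = aa * bb"
    using aa_pos bb_pos real_sqrt_mult_self[of "aa * bb"] by simp
  moreover have "cc * cc = 1 / (sqrt (aa * bb) * sqrt (aa * bb))" unfolding cc_def by simp
  ultimately show ?thesis by simp
qed

lemma final_eval: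
  assumes x: "x > 2"
    and mu: "char_poly L1 = (\<Prod>i<n1. [:- \<mu> i, 1:])" and mu0: "\<mu> 0 = 0"
    and nu: "char_poly L2 = (\<Prod>i<n2. [:- \<nu> i, 1:])" and nu0: "\<nu> 0 = 0"
  shows "poly (char_poly (norm_laplacian Vs Es)) x * (x - 1) ^ (n1 - m1) =
    x * (x - 1) ^ (m1 - n1)
    * (x ^ 2 - (2 + real n1 / bb) * x + (2 * real n1 / bb + real n2 * (bb - real n1) / (aa * bb)))
    * (\<Prod>i\<in>{1..<n1}. (x - 1) ^ 2 - real r1 * (2 - \<mu> i) / (2 * aa))
    * (\<Prod>i\<in>{1..<n2}. x - (real n1 + real r2 * \<nu> i) / bb)"
proof -
  define y where "y = x - 1"
  have y: "y \<noteq> 0" "y > 0" using x unfolding y_def by auto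
  define F where "F i = (x - 1) ^ 2 - real r1 * (2 - \<mu> i) / (2 * aa)" for i
  define G where "G i = x - (real n1 + real r2 * \<nu> i) / bb" for i
  define P where "P = (\<Prod>i\<in>{1..<n1}. F i)"
  define Q where "Q = (\<Prod>i\<in>{1..<n2}. G i)"
  define k where "k = real n2 * (real n1 * cc * cc / ss x) / tt x"
  define quad where "quad = x ^ 2 - (2 + real n1 / bb) * x + (2 * real n1 / bb + real n2 * (bb - real n1) / (aa * bb))"
  have Fi: "ss x + be x * \<mu> i = F i / y" for i
    unfolding F_def ss_def be_def y_def by (rule alg_F[OF y(1)[unfolded y_def] aa_pos])
  have h1: "(\<Prod>i<n1. ss x + be x * \<mu> i) = ss x * (P / y ^ (n1 - 1))"
  proof -
    have "(\<Prod>i<n1. ss x + be x * \<mu> i) = ss x * (\<Prod>i\<in>{1..<n1}. F i * (1 / y))"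
      using prod_split0[OF n1_pos, of "\<lambda>i. ss x + be x * \<mu> i"] mu0 Fi by simp
    also have "(\<Prod>i\<in>{1..<n1}. F i * (1 / y)) = P * (1 / y) ^ (n1 - 1)"
      unfolding P_def prod.distrib by simp
    finally show ?thesis by (simp add: power_one_over)
  qed
  have Gi: "tt x + be2 * \<nu> i = G i" for i
    unfolding G_def tt_def be2_def by (rule alg_G) (use r2 in \<open>auto simp: bb_def\<close>)
  have h2: "(\<Prod>i<n2. tt x + be2 * \<nu> i) = tt x * Q"
    using prod_split0[OF n2_pos, of "\<lambda>i. tt x + be2 * \<nu> i"] nu0 Gi unfolding Q_def by simp
  have s: "ss x \<noteq> 0"
  proof -
    have "real r1 / (aa * (x - 1)) < 1"
    proof -
      have "real r1 \<le> aa" unfolding aa_def by simp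
      moreover have "aa < aa * (x - 1)" using aa_pos x by simp
      ultimately have "real r1 < aa * (x - 1)" by linarith
      thus ?thesis using aa_pos x by (simp add: divide_less_eq)
    qed
    thus ?thesis unfolding ss_def using x by simp
  qed
  have "real r2 / bb \<ge> 0" using bb_pos by simp
  hence t: "tt x \<noteq> 0" unfolding tt_def using x by linarith
  have h3: "y * (ss x * ((1 - k) * tt x)) = x * quad"
  proof -
    have ss': "ss x = y - (aa - real n2) / (aa * y)" unfolding ss_def aa_def y_def by simp
    have tt': "tt x = y + (bb - real n1) / bb" unfolding tt_def bb_def y_def by simp
    have "y * (ss x * ((1 - k) * tt x)) = (y + 1) * ((y + 1) ^ 2 - (2 + real n1 / bb) * (y + 1)
       + (2 * real n1 / bb + real n2 * (bb - real n1) / (aa * bb)))"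
      unfolding k_def by (rule alg_H[OF y(2) aa_pos bb_pos ss' tt' cc2 s t])
    thus ?thesis unfolding quad_def y_def by simp
  qed
  have pw: "y ^ m1 * y ^ (n1 - m1) = y ^ (m1 - n1) * (y ^ (n1 - 1) * y)"
  proof -
    have e: "m1 + (n1 - m1) = (m1 - n1) + ((n1 - 1) + 1)" using n1_pos by arith
    have "y ^ m1 * y ^ (n1 - m1) = y ^ (m1 + (n1 - m1))" by (simp only: power_add)
    also have "\<dots> = y ^ ((m1 - n1) + ((n1 - 1) + 1))" by (simp only: e)
    also have "\<dots> = y ^ (m1 - n1) * (y ^ (n1 - 1) * y)" by (simp only: power_add power_one_right)
    finally show ?thesis .
  qed
  define Y1 where "Y1 = y ^ (m1 - n1)"
  define Y2 where "Y2 = y ^ (n1 - 1)"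
  have Y2: "Y2 \<noteq> 0" unfolding Y2_def using y by simp
  define C where "C = ss x * ((1 - k) * tt x)"
  have "poly (char_poly (norm_laplacian Vs Es)) x * (x - 1) ^ (n1 - m1)
     = y ^ m1 * (ss x * (P / y ^ (n1 - 1)) * ((1 - k) * (tt x * Q))) * y ^ (n1 - m1)"
    unfolding main_eval[OF x mu nu] h1 h2 k_def y_def ..
  also have "\<dots> = (y ^ m1 * y ^ (n1 - m1)) * (P / Y2) * Q * C"
    unfolding C_def Y2_def by (simp add: ac_simps)
  also have "\<dots> = Y1 * P * Q * (Y2 / Y2) * (y * C)"
    unfolding pw Y1_def[symmetric] Y2_def[symmetric] by (simp add: ac_simps)
  also have "\<dots> = Y1 * P * Q * (y * C)" using Y2 by simp
  also have "y * C = x * quad" unfolding C_def by (rule h3)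
  also have "Y1 * P * Q * (x * quad) = x * Y1 * quad * P * Q" by (simp only: ac_simps)
  finally show ?thesis unfolding quad_def P_def Q_def F_def G_def Y1_def y_def .
qed
end



lemma poly_eq_gt: fixes p q :: "real poly" assumes "\<And>x. x > c \<Longrightarrow> poly p x = poly q x" shows "p = q"
proof (rule ccontr)
  assume "p \<noteq> q"
  hence "p - q \<noteq> 0" by simp
  hence fin: "finite {x. poly (p - q) x = 0}" by (rule poly_roots_finite)
  have "{c<..} \<subseteq> {x. poly (p - q) x = 0}" using assms by auto
  hence "finite {c<..}" using fin finite_subset by blast
  thus False using infinite_Ioi by blast
qed

theorem theorem2p3:
  fixes V1 :: "'a set" and E1 :: "'a set set" and V2 :: "'b set" and E2 :: "'b set set"
    and r1 r2 :: nat and \<mu> \<nu> :: "nat \<Rightarrow> real"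
  assumes g1: "simple_graph V1 E1" and g2: "simple_graph V2 E2"
    and ne1: "V1 \<noteq> {}" and ne2: "V2 \<noteq> {}"
    and reg1: "regular V1 E1 r1" and r1: "r1 \<ge> 1"
    and reg2: "regular V2 E2 r2" and r2: "r2 \<ge> 1"
    and mu0: "\<mu> 0 = 0"
    and mu: "char_poly (norm_laplacian V1 E1) = (\<Prod>i<card V1. [:- \<mu> i, 1:])"
    and nu0: "\<nu> 0 = 0"
    and nu: "char_poly (norm_laplacian V2 E2) = (\<Prod>i<card V2. [:- \<nu> i, 1:])"
  shows
    "(let n1 = card V1; n2 = card V2; m1 = card E1 in
      char_poly (norm_laplacian (svj_vertices V1 E1 V2) (svj_edges V1 E1 V2 E2))
        * [:-1, 1:] ^ (n1 - m1)
      = [:0, 1:] * [:-1, 1:] ^ (m1 - n1)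
        * ([:0, 1:] ^ 2 - [:0, 2 + real n1 / (real r2 + real n1):]
           + [: 2 * real n1 / (real r2 + real n1)
                + real n2 * real r2 / ((real r1 + real n2) * (real r2 + real n1)) :])
        * (\<Prod>i\<in>{1..<n1}. [:-1, 1:] ^ 2
             - [: real r1 * (2 - \<mu> i) / (2 * (real r1 + real n2)) :])
        * (\<Prod>i\<in>{1..<n2}. [:- ((real n1 + real r2 * \<nu> i) / (real r2 + real n1)), 1:]))"
proof -
  interpret svjl V1 E1 V2 E2 r1 r2
    by (unfold_locales; fact)
  have aa: "aa = real r1 + real (card V2)" unfolding aa_def by simp
  have bb: "bb = real r2 + real (card V1)" unfolding bb_def by simp
  show ?thesis unfolding Let_def
  proof (rule poly_eq_gt[of 2])
    fix x :: real assume x: "x > 2"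
    note fe = final_eval[OF x mu mu0 nu nu0, unfolded aa bb]
    have e1: "real r2 + real (card V1) - real (card V1) = real r2" by simp
    show "poly (char_poly (norm_laplacian (svj_vertices V1 E1 V2) (svj_edges V1 E1 V2 E2)) *
          [:- 1, 1:] ^ (card V1 - card E1)) x = poly ([:0, 1:] * [:- 1, 1:] ^ (card E1 - card V1) *
          ([:0, 1:]\<^sup>2 - [:0, 2 + real (card V1) / (real r2 + real (card V1)):] +
           [:2 * real (card V1) / (real r2 + real (card V1)) +
              real (card V2) * real r2 / ((real r1 + real (card V2)) * (real r2 + real (card V1))):]) *
          (\<Prod>i = 1..<card V1. [:- 1, 1:]\<^sup>2 - [:real r1 * (2 - \<mu> i) / (2 * (real r1 + real (card V2))):]) *
          (\<Prod>i = 1..<card V2. [:- ((real (card V1) + real r2 * \<nu> i) / (real r2 + real (card V1))), 1:])) x"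
      using fe unfolding e1 by (simp add: poly_prod poly_power algebra_simps)
  qed
qed



end
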